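(* Let $(G,E)$ be an undirected weighted graph with nodes $n_1,\dots,n_N$, symmetric nonnegative weights $w_{ij}$, strengths $k_i=\sum_sw_{is}$, $2m=\sum_ik_i>0$, $\gamma\in\mathbb R$, $\hat n\ge1$. For each $\epsilon>0$ let $f^\epsilon$ be a global minimizer over $X=\{f:G\to\mathbb R^{\hat n}\}$ of $$H_\epsilon(f)=\sum_{l=1}^{\hat n}\langle f^{(l)},\mathbf Lf^{(l)}\rangle+\frac{1}{\epsilon^2}\sum_{i=1}^N W_{\mathrm{multi}}(f(n_i))-\gamma\|f-\mathrm{mean}(f)\|_{\ell_2}^2.$$ Then for any sequence $\epsilon_n\to0^+$, any convergent subsequence of $(f^{\epsilon_n})$ converges (in $X\cong\mathbb R^{N\times\hat n}$) to the partition function of a partition that is a global maximizer of the modularity $Q$ among all partitions of $G$ into at most $\hat n$ communities.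
   Context: $\mathbf L=\mathbf D-\mathbf W$ is the graph Laplacian ($\mathbf W=[w_{ij}]$, $\mathbf D=\mathrm{diag}(k_i)$), with $\langle z,\mathbf Lz\rangle=\frac12\sum_{i,j}w_{ij}(z_i-z_j)^2$. $f=(f^{(1)},\dots,f^{(\hat n)})$. $V^{\hat n}=\{\vec e_1,\dots,\vec e_{\hat n}\}$ is the standard basis of $\mathbb R^{\hat n}$; $W_{\mathrm{multi}}(x)=\prod_{l=1}^{\hat n}\|x-\vec e_l\|_{\ell_1}^2$. For $h:G\to\mathbb R$: $\|h\|_{\ell_2}^2=\sum_ik_ih_i^2$, $\mathrm{mean}(h)=\frac1{2m}\sum_ik_ih_i$; for vector-valued $f$, $\|f\|_{\ell_2}^2=\sum_l\|f^{(l)}\|_{\ell_2}^2$ and $\mathrm{mean}$ is componentwise. A partition into at most $\hat n$ communities is an assignment $g_i\in\{1,\dots,\hat n\}$ (communities may be empty); its partition function is $f:G\to V^{\hat n}$, $f(n_i)=\vec e_{g_i}$. Its modularity is $Q(g)=\frac1{2m}\sum_{i,j}\big(w_{ij}-\gamma\frac{k_ik_j}{2m}\big)\delta(g_i,g_j)$, with $\delta(g_i,g_j)=1$ if $g_i=g_j$ and $0$ otherwise. *)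

theory Defs
  imports "HOL-Analysis.Analysis"
begin

text \<open>Nodes are the elements of a finite type 'v; the \<open>n\<^sup>^\<close> components are
  indexed by a finite type 'c (so \<open>n\<^sup>^ = CARD('c) \<ge> 1\<close>).
  A function f : G \<rightarrow> R^n^ is an element of real^'c^'v (\<cong> R^(N \<times> n^)),
  with f $ i $ l = f^(l)(n_i).\<close>

definition strength :: "('v::finite \<Rightarrow> 'v \<Rightarrow> real) \<Rightarrow> 'v \<Rightarrow> real" where
  "strength w i = (\<Sum>s\<in>UNIV. w i s)"

definition total_weight :: "('v::finite \<Rightarrow> 'v \<Rightarrow> real) \<Rightarrow> real" where
  "total_weight w = (\<Sum>i\<in>UNIV. strength w i)"

definition laplacian :: "('v::finite \<Rightarrow> 'v \<Rightarrow> real) \<Rightarrow> real^'v^'v" where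
  "laplacian w = (\<chi> i j. (if i = j then strength w i else 0) - w i j)"

definition std_basis :: "'c::finite \<Rightarrow> real^'c" where
  "std_basis l = (\<chi> j. if j = l then 1 else 0)"

definition l1_norm :: "real^'c::finite \<Rightarrow> real" where
  "l1_norm x = (\<Sum>j\<in>UNIV. \<bar>x $ j\<bar>)"

definition W_multi :: "real^'c::finite \<Rightarrow> real" where
  "W_multi x = (\<Prod>l\<in>UNIV. (l1_norm (x - std_basis l))\<^sup>2)"

definition comp :: "real^'c^'v \<Rightarrow> 'c \<Rightarrow> real^'v" where
  "comp f l = (\<chi> i. f $ i $ l)"

definition wl2sq :: "('v::finite \<Rightarrow> 'v \<Rightarrow> real) \<Rightarrow> real^'v \<Rightarrow> real" where
  "wl2sq w h = (\<Sum>i\<in>UNIV. strength w i * (h $ i)\<^sup>2)"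

definition wmean :: "('v::finite \<Rightarrow> 'v \<Rightarrow> real) \<Rightarrow> real^'v \<Rightarrow> real" where
  "wmean w h = (1 / total_weight w) * (\<Sum>i\<in>UNIV. strength w i * h $ i)"

definition H_eps :: "('v::finite \<Rightarrow> 'v \<Rightarrow> real) \<Rightarrow> real \<Rightarrow> real \<Rightarrow> real^'c::finite^'v \<Rightarrow> real" where
  "H_eps w \<gamma> \<epsilon> f =
     (\<Sum>l\<in>UNIV. comp f l \<bullet> (laplacian w *v comp f l))
     + (1 / \<epsilon>\<^sup>2) * (\<Sum>i\<in>UNIV. W_multi (f $ i))
     - \<gamma> * (\<Sum>l\<in>UNIV. wl2sq w (comp f l - (\<chi> i. wmean w (comp f l))))"

definition partition_fun :: "('v::finite \<Rightarrow> 'c::finite) \<Rightarrow> real^'c^'v" where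
  "partition_fun g = (\<chi> i. std_basis (g i))"

definition modularity :: "('v::finite \<Rightarrow> 'v \<Rightarrow> real) \<Rightarrow> real \<Rightarrow> ('v \<Rightarrow> 'c) \<Rightarrow> real" where
  "modularity w \<gamma> g = (1 / total_weight w) *
     (\<Sum>i\<in>UNIV. \<Sum>j\<in>UNIV. (w i j - \<gamma> * strength w i * strength w j / total_weight w)
        * (if g i = g j then 1 else 0))"

end

theory Submission imports Defs begin

definition Tq :: "('v::finite \<Rightarrow> 'v \<Rightarrow> real) \<Rightarrow> real \<Rightarrow> real^'c::finite^'v \<Rightarrow> real" where
  "Tq w \<gamma> f = (\<Sum>l\<in>UNIV. comp f l \<bullet> (laplacian w *v comp f l))
     - \<gamma> * (\<Sum>l\<in>UNIV. wl2sq w (comp f l - (\<chi> i. wmean w (comp f l))))"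

lemma H_split: "H_eps w \<gamma> \<epsilon> f = Tq w \<gamma> f + (1/\<epsilon>\<^sup>2) * (\<Sum>i\<in>UNIV. W_multi (f$i))"
  by (simp add: H_eps_def Tq_def)

lemma lap_expand: "comp f l \<bullet> (laplacian w *v comp f l) =
   (\<Sum>i\<in>UNIV. strength w i * (f$i$l)^2) - (\<Sum>i\<in>UNIV. \<Sum>j\<in>UNIV. w i j * f$i$l * f$j$l)"
proof -
  have "comp f l \<bullet> (laplacian w *v comp f l) = (\<Sum>i\<in>UNIV. f$i$l * (\<Sum>j\<in>UNIV. ((if i = j then strength w i else 0) - w i j) * f$j$l))"
    by (simp add: inner_vec_def matrix_vector_mult_def laplacian_def comp_def)
  also have "\<dots> = (\<Sum>i\<in>UNIV. strength w i * (f$i$l)^2 - (\<Sum>j\<in>UNIV. w i j * f$i$l * f$j$l))"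
    by (rule sum.cong, simp, simp add: left_diff_distrib sum_subtractf sum_distrib_left power2_eq_square
       if_distrib[where f="\<lambda>x. x * _"] cong: if_cong) (simp add: algebra_simps sum_distrib_left)
  finally show ?thesis by (simp add: sum_subtractf)
qed

lemma var_expand:
  assumes "total_weight w \<noteq> 0"
  shows "wl2sq w (h - (\<chi> i. wmean w h)) =
    (\<Sum>i\<in>UNIV. strength w i * (h$i)^2) - (\<Sum>i\<in>UNIV. strength w i * h$i)^2 / total_weight w"
proof -
  define M where "M = total_weight w"
  define S where "S = (\<Sum>i\<in>UNIV. strength w i * h$i)"
  define mu where "mu = S / M"
  have M: "M = (\<Sum>i\<in>UNIV. strength w i)" by (simp add: M_def total_weight_def)
  have wm: "wmean w h = mu" by (simp add: wmean_def mu_def S_def M_def)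
  have "wl2sq w (h - (\<chi> i. wmean w h)) = (\<Sum>i\<in>UNIV. strength w i * (h$i)^2 - 2 * mu * (strength w i * h$i) + mu^2 * strength w i)"
    unfolding wl2sq_def wm by (rule sum.cong) (auto simp: power2_eq_square algebra_simps)
  also have "\<dots> = (\<Sum>i\<in>UNIV. strength w i * (h$i)^2) - 2 * mu * S + mu^2 * M"
    by (simp add: sum.distrib sum_subtractf sum_distrib_left M S_def)
  also have "\<dots> = (\<Sum>i\<in>UNIV. strength w i * (h$i)^2) - S^2 / M"
    using assms unfolding mu_def M_def[symmetric] by (simp add: power2_eq_square field_simps)
  finally show ?thesis by (simp add: S_def M_def)
qed

lemma Tq_expand:
  assumes "total_weight w \<noteq> 0"
  shows "Tq w \<gamma> f = (\<Sum>l\<in>UNIV. (\<Sum>i\<in>UNIV. strength w i * (f$i$l)^2) - (\<Sum>i\<in>UNIV. \<Sum>j\<in>UNIV. w i j * f$i$l * f$j$l))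
     - \<gamma> * (\<Sum>l\<in>UNIV. (\<Sum>i\<in>UNIV. strength w i * (f$i$l)^2) - (\<Sum>i\<in>UNIV. strength w i * f$i$l)^2 / total_weight w)"
  unfolding Tq_def lap_expand var_expand[OF assms] by (simp add: comp_def)

lemma Tq_tendsto:
  assumes "total_weight w \<noteq> 0" "X \<longlonglongrightarrow> F"
  shows "(\<lambda>n. Tq w \<gamma> (X n)) \<longlonglongrightarrow> Tq w \<gamma> F"
  unfolding Tq_expand[OF assms(1)]
  using assms by (auto intro!: tendsto_intros)

lemma W_tendsto:
  assumes "X \<longlonglongrightarrow> F"
  shows "(\<lambda>n. \<Sum>i\<in>UNIV. W_multi (X n $ i)) \<longlonglongrightarrow> (\<Sum>i\<in>UNIV. W_multi (F $ i))"
  unfolding W_multi_def l1_norm_def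
  by (intro tendsto_intros assms)

lemma W_nonneg: "W_multi x \<ge> 0"
  unfolding W_multi_def by (intro prod_nonneg) auto

lemma W_pf: "W_multi (std_basis l) = 0"
proof -
  have "l1_norm (std_basis l - std_basis l) = 0" by (simp add: l1_norm_def)
  hence "\<exists>a\<in>UNIV. (l1_norm (std_basis l - std_basis a))\<^sup>2 = 0" by (intro bexI[where x=l]) simp_all
  thus ?thesis unfolding W_multi_def by (intro prod_zero) auto
qed

lemma W_zero: "W_multi x = 0 \<Longrightarrow> \<exists>l. x = std_basis l"
proof -
  assume "W_multi x = 0"
  then obtain l where "(l1_norm (x - std_basis l))\<^sup>2 = 0" unfolding W_multi_def by auto
  hence "(\<Sum>j\<in>UNIV. \<bar>(x - std_basis l) $ j\<bar>) = 0" by (simp add: l1_norm_def)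
  hence "\<forall>j. \<bar>(x - std_basis l) $ j\<bar> = 0" by (subst (asm) sum_nonneg_eq_0_iff) auto
  hence "x = std_basis l" by (simp add: vec_eq_iff)
  thus ?thesis by blast
qed

lemma Tq_pf:
  assumes "total_weight w \<noteq> 0"
  shows "Tq w \<gamma> (partition_fun g) = total_weight w * (1 - \<gamma>) - total_weight w * modularity w \<gamma> g"
proof -
  let ?k = "strength w" and ?M = "total_weight w"
  have e: "partition_fun g $ i $ l = (if g i = l then 1 else 0)" for i l
    by (simp add: partition_fun_def std_basis_def)
  have e2: "(partition_fun g $ i $ l)^2 = partition_fun g $ i $ l" for i l
    by (simp add: e)
  have A: "(\<Sum>l\<in>UNIV. \<Sum>i\<in>UNIV. ?k i * (partition_fun g $i$l)^2) = ?M"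
    unfolding e2 unfolding e total_weight_def by (subst sum.swap) (simp add: if_distrib cong: if_cong)
  have sw: "(\<Sum>l\<in>UNIV. \<Sum>i\<in>UNIV. \<Sum>j\<in>UNIV. F i j l) = (\<Sum>i\<in>UNIV. \<Sum>j\<in>UNIV. \<Sum>l\<in>UNIV. F i j l)"
    for F :: "'v \<Rightarrow> 'v \<Rightarrow> 'c \<Rightarrow> real"
  proof -
    have "(\<Sum>l\<in>UNIV. \<Sum>i\<in>UNIV. \<Sum>j\<in>UNIV. F i j l) = (\<Sum>i\<in>UNIV. \<Sum>l\<in>UNIV. \<Sum>j\<in>UNIV. F i j l)"
      by (rule sum.swap)
    also have "\<dots> = (\<Sum>i\<in>UNIV. \<Sum>j\<in>UNIV. \<Sum>l\<in>UNIV. F i j l)"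
      by (rule sum.cong[OF refl], rule sum.swap)
    finally show ?thesis .
  qed
  have d: "(\<Sum>l\<in>UNIV. c * (if g i = l then 1 else 0) * (if g j = l then 1 else 0)) = c * (if g i = g j then 1 else 0)"
    for i j and c :: real
  proof -
    have "(\<Sum>l\<in>UNIV. c * (if g i = l then 1 else 0) * (if g j = l then (1::real) else 0))
       = (\<Sum>l\<in>UNIV. if g i = l then c * (if g j = l then 1 else 0) else 0)"
      by (rule sum.cong) auto
    also have "\<dots> = c * (if g j = g i then 1 else 0)" by (simp add: sum.delta')
    finally show ?thesis by auto
  qed
  have B: "(\<Sum>l\<in>UNIV. \<Sum>i\<in>UNIV. \<Sum>j\<in>UNIV. w i j * partition_fun g $i$l * partition_fun g $j$l)
      = (\<Sum>i\<in>UNIV. \<Sum>j\<in>UNIV. w i j * (if g i = g j then 1 else 0))"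
    unfolding sw unfolding e d ..
  have C: "(\<Sum>l\<in>UNIV. (\<Sum>i\<in>UNIV. ?k i * partition_fun g $i$l)^2)
      = (\<Sum>i\<in>UNIV. \<Sum>j\<in>UNIV. ?k i * ?k j * (if g i = g j then 1 else 0))"
  proof -
    have "(\<Sum>l\<in>UNIV. (\<Sum>i\<in>UNIV. ?k i * partition_fun g $i$l)^2)
      = (\<Sum>l\<in>UNIV. \<Sum>i\<in>UNIV. \<Sum>j\<in>UNIV. (?k i * ?k j) * partition_fun g $i$l * partition_fun g $j$l)"
      unfolding power2_eq_square sum_product by (simp add: algebra_simps)
    also have "\<dots> = (\<Sum>i\<in>UNIV. \<Sum>j\<in>UNIV. ?k i * ?k j * (if g i = g j then 1 else 0))"
      unfolding sw unfolding e d ..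
    finally show ?thesis .
  qed
  define P where "P = (\<Sum>i\<in>UNIV. \<Sum>j\<in>UNIV. w i j * (if g i = g j then 1 else (0::real)))"
  define K where "K = (\<Sum>i\<in>UNIV. \<Sum>j\<in>UNIV. ?k i * ?k j * (if g i = g j then 1 else (0::real)))"
  have V: "(\<Sum>l\<in>UNIV. (\<Sum>i\<in>UNIV. ?k i * (partition_fun g $i$l)^2) - (\<Sum>i\<in>UNIV. ?k i * partition_fun g $i$l)^2 / ?M)
     = ?M - K / ?M"
    unfolding sum_subtractf sum_divide_distrib[symmetric] A C K_def ..
  have L: "(\<Sum>l\<in>UNIV. (\<Sum>i\<in>UNIV. ?k i * (partition_fun g $i$l)^2) - (\<Sum>i\<in>UNIV. \<Sum>j\<in>UNIV. w i j * partition_fun g $i$l * partition_fun g $j$l))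
     = ?M - P"
    unfolding sum_subtractf A B P_def ..
  have Q: "(\<Sum>i\<in>UNIV. \<Sum>j\<in>UNIV. (w i j - \<gamma> * ?k i * ?k j / ?M) * (if g i = g j then 1 else 0)) = P - \<gamma> / ?M * K"
    unfolding P_def K_def
    by (simp add: left_diff_distrib sum_subtractf sum_distrib_left mult.assoc)
  show ?thesis
    unfolding Tq_expand[OF assms] V L modularity_def Q
    using assms by (simp add: field_simps)
qed

theorem mainTheorem3:
  fixes w :: "'v::finite \<Rightarrow> 'v \<Rightarrow> real"
    and \<gamma> :: real
    and fe :: "real \<Rightarrow> real^'c::finite^'v"
    and eps :: "nat \<Rightarrow> real"
    and r :: "nat \<Rightarrow> nat"
    and F :: "real^'c^'v"
  assumes sym: "\<And>i j. w i j = w j i"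
    and nonneg: "\<And>i j. w i j \<ge> 0"
    and pos: "total_weight w > 0"
    and minimizer: "\<And>\<epsilon> (f :: real^'c^'v). \<epsilon> > 0 \<Longrightarrow> H_eps w \<gamma> \<epsilon> (fe \<epsilon>) \<le> H_eps w \<gamma> \<epsilon> f"
    and eps_pos: "\<And>n. eps n > 0"
    and eps_lim: "eps \<longlonglongrightarrow> 0"
    and subseq: "strict_mono r"
    and conv: "(\<lambda>n. fe (eps (r n))) \<longlonglongrightarrow> F"
  shows "\<exists>g :: 'v \<Rightarrow> 'c. F = partition_fun g \<and>
           (\<forall>g' :: 'v \<Rightarrow> 'c. modularity w \<gamma> g' \<le> modularity w \<gamma> g)"
proof -
  define M where "M = total_weight w"
  have M0: "total_weight w \<noteq> 0" using pos by simp
  define X where "X = (\<lambda>n. fe (eps (r n)))"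
  define e where "e = (\<lambda>n. eps (r n))"
  have e_pos: "e n > 0" for n using eps_pos by (simp add: e_def)
  have e_lim: "e \<longlonglongrightarrow> 0" unfolding e_def using LIMSEQ_subseq_LIMSEQ[OF eps_lim subseq] by (simp add: o_def)
  have XF: "X \<longlonglongrightarrow> F" using conv by (simp add: X_def)
  define Wsum where "Wsum = (\<lambda>f :: real^'c^'v. \<Sum>i\<in>UNIV. W_multi (f $ i))"
  have Wnn: "Wsum f \<ge> 0" for f unfolding Wsum_def by (intro sum_nonneg W_nonneg)
  have Wpf: "Wsum (partition_fun g) = 0" for g :: "'v \<Rightarrow> 'c"
    unfolding Wsum_def partition_fun_def by (simp add: W_pf)
  have key: "Tq w \<gamma> (X n) + Wsum (X n) / (e n)\<^sup>2 \<le> Tq w \<gamma> (partition_fun g)" for n and g :: "'v \<Rightarrow> 'c"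
  proof -
    have "H_eps w \<gamma> (e n) (X n) \<le> H_eps w \<gamma> (e n) (partition_fun g)"
      unfolding X_def e_def using minimizer eps_pos by blast
    thus ?thesis using Wpf[of g] unfolding H_split Wsum_def by simp
  qed
  obtain g0 :: "'v \<Rightarrow> 'c" where True by blast
  have Tl: "(\<lambda>n. Tq w \<gamma> (X n)) \<longlonglongrightarrow> Tq w \<gamma> F" by (rule Tq_tendsto[OF M0 XF])
  have Wl: "(\<lambda>n. Wsum (X n)) \<longlonglongrightarrow> Wsum F" unfolding Wsum_def by (rule W_tendsto[OF XF])
  have bnd: "Wsum (X n) \<le> (e n)\<^sup>2 * (Tq w \<gamma> (partition_fun g0) - Tq w \<gamma> (X n))" for n
  proof -
    have "Wsum (X n) / (e n)\<^sup>2 \<le> Tq w \<gamma> (partition_fun g0) - Tq w \<gamma> (X n)" using key[of n g0] by simp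
    thus ?thesis using e_pos[of n] by (simp add: divide_le_eq mult.commute)
  qed
  have bl: "(\<lambda>n. (e n)\<^sup>2 * (Tq w \<gamma> (partition_fun g0) - Tq w \<gamma> (X n))) \<longlonglongrightarrow> 0\<^sup>2 * (Tq w \<gamma> (partition_fun g0) - Tq w \<gamma> F)"
    by (intro tendsto_intros e_lim Tl)
  have "Wsum F \<le> 0" using LIMSEQ_le[OF Wl bl] bnd by simp
  hence WF: "Wsum F = 0" using Wnn[of F] by simp
  have "\<forall>i. W_multi (F $ i) = 0"
    using WF unfolding Wsum_def by (subst (asm) sum_nonneg_eq_0_iff) (auto intro: W_nonneg)
  hence "\<forall>i. \<exists>l. F $ i = std_basis l" using W_zero by blast
  then obtain g :: "'v \<Rightarrow> 'c" where g: "\<And>i. F $ i = std_basis (g i)" by metis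
  have Fg: "F = partition_fun g" by (simp add: vec_eq_iff partition_fun_def g)
  have "modularity w \<gamma> g' \<le> modularity w \<gamma> g" for g' :: "'v \<Rightarrow> 'c"
  proof -
    have "Tq w \<gamma> (X n) \<le> Tq w \<gamma> (partition_fun g')" for n
    proof -
      have "0 \<le> Wsum (X n) / (e n)\<^sup>2" using Wnn by simp
      thus ?thesis using key[of n g'] by linarith
    qed
    hence "Tq w \<gamma> F \<le> Tq w \<gamma> (partition_fun g')" using LIMSEQ_le[OF Tl tendsto_const] by blast
    hence "total_weight w * modularity w \<gamma> g' \<le> total_weight w * modularity w \<gamma> g"
      unfolding Fg Tq_pf[OF M0] by simp
    thus ?thesis using pos by simp
  qed
  thus ?thesis using Fg by blast
qed

end
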